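(* Let $\mathcal{A}$ be a finite set of positive integers, let $w \leqslant z$ be real numbers, let $0 < m_0 \leqslant 1$, and let $m_1, m_2$ be real numbers with $(m_1, m_2) \in \mathcal{U}$. Then $$ S(\mathcal{A}, z) \geqslant S(\mathcal{A}, w) - \frac{m_0m_1 + m_0m_2 + m_1m_2 - m_0 - m_1 - m_2 + 1}{m_0m_1m_2} \sum_{w \leqslant p_1 < z} S(\mathcal{A}_{p_1}, w) + \frac{2(m_0 + m_1 + m_2 - 3)}{m_0m_1m_2} \sum_{w \leqslant p_2 < p_1 < z} S(\mathcal{A}_{p_1p_2}, w) - \frac{6}{m_0m_1m_2} \sum_{w \leqslant p_3 < p_2 < p_1 < z} S(\mathcal{A}_{p_1p_2p_3}, w). $$
   Context: Throughout, $p, p_1, p_2, \dots$ denote prime numbers. For a finite set $\mathcal{A}$ of positive integers and a positive integer $d$, $\mathcal{A}_d = \{a : ad \in \mathcal{A}\}$. For real $z$, $S(\mathcal{A}, z)$ denotes the number of $a \in \mathcal{A}$ having no prime factor less than $z$. Let $T = (0,1] \cup [2,3] \cup [4,5] \cup \cdots$, i.e. $T$ is the union of $(0,1]$ and the intervals $[k-1,k]$ over all odd integers $k \geqslant 3$, and let $\mathcal{U} = \{(x_1, x_2) : x_1, x_2 \in T,\ |x_1 - x_2| \leqslant 1\}$. *)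

theory Defs
  imports "HOL-Computational_Algebra.Primes" Complex_Main
begin

definition sift :: "nat set \<Rightarrow> real \<Rightarrow> nat" where
  "sift A z = card {a \<in> A. \<forall>p. prime p \<and> real p < z \<longrightarrow> \<not> p dvd a}"

definition subseq_d :: "nat set \<Rightarrow> nat \<Rightarrow> nat set" where
  "subseq_d A d = {a. a * d \<in> A}"

definition T_set :: "real set" where
  "T_set = {0<..1} \<union> (\<Union>k\<in>{k::nat. odd k \<and> k \<ge> 3}. {real k - 1 .. real k})"

definition U_set :: "(real \<times> real) set" where
  "U_set = {(x1, x2). x1 \<in> T_set \<and> x2 \<in> T_set \<and> \<bar>x1 - x2\<bar> \<le> 1}"

definition primes_between :: "real \<Rightarrow> real \<Rightarrow> nat set" where
  "primes_between w z = {p. prime p \<and> w \<le> real p \<and> real p < z}"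

end

theory Submission
  imports Defs
begin

lemma T_elem: assumes "m \<in> T_set" shows "\<exists>j::nat. odd j \<and> real j - 1 \<le> m \<and> m \<le> real j \<and> m > 0"
proof -
  from assms consider "m \<in> {0<..1}" | j::nat where "odd j" "j \<ge> 3" "m \<in> {real j - 1 .. real j}"
    unfolding T_set_def by blast
  then show ?thesis
  proof cases
    case 1 then show ?thesis by (intro exI[of _ 1]) auto
  next
    case 2 then show ?thesis by (intro exI[of _ j]) auto
  qed
qed

lemma U_prod: assumes "(m1, m2) \<in> U_set" shows "(real k - m1) * (real k - m2) \<ge> 0"
proof (rule ccontr)
  assume c: "\<not> ?thesis"
  from assms have t1: "m1 \<in> T_set" and t2: "m2 \<in> T_set" and d: "\<bar>m1 - m2\<bar> \<le> 1"
    unfolding U_set_def by auto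
  have key: False if h: "x1 \<in> T_set" "x2 \<in> T_set" "\<bar>x1 - x2\<bar> \<le> 1" "x1 < real k" "real k < x2" for x1 x2
  proof -
    obtain j1::nat where j1: "odd j1" "real j1 - 1 \<le> x1" "x1 \<le> real j1" using T_elem[OF h(1)] by blast
    obtain j2::nat where j2: "odd j2" "real j2 - 1 \<le> x2" "x2 \<le> real j2" using T_elem[OF h(2)] by blast
    show False
    proof (cases "k \<le> j1")
      case True
      have "real j1 - 1 < real k" using j1 h by linarith
      hence "k = j1" using True by linarith
      hence "j1 < j2" using h j2 by (metis of_nat_less_iff le_less_trans not_le)
      hence "j1 + 2 \<le> j2" using j1 j2 by presburger
      hence "real j1 + 2 \<le> real j2" by linarith
      then show False using h j2 \<open>k = j1\<close> by linarith
    next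
      case False
      hence "real j1 + 1 \<le> real k" by linarith
      then show False using h j1 by linarith
    qed
  qed
  from c have "(m1 < real k \<and> real k < m2) \<or> (m2 < real k \<and> real k < m1)"
    by (smt (verit) mult_nonneg_nonneg mult_nonpos_nonpos)
  then show False
  proof
    assume "m1 < real k \<and> real k < m2" then show False using key[OF t1 t2 d] by blast
  next
    assume "m2 < real k \<and> real k < m1" then show False using key[OF t2 t1] d by auto
  qed
qed

lemma poly:
  fixes m0 m1 m2 :: real and k :: nat
  assumes "0 < m0" "m0 \<le> 1" "(m1, m2) \<in> U_set"
  shows "(if k = 0 then 1 else 0) \<ge> 1 - (m0*m1 + m0*m2 + m1*m2 - m0 - m1 - m2 + 1) / (m0*m1*m2) * real k
     + 2 * (m0 + m1 + m2 - 3) / (m0*m1*m2) * (real k * (real k - 1) / 2)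
     - 6 / (m0*m1*m2) * (real k * (real k - 1) * (real k - 2) / 6)"
proof -
  from assms(3) have "m1 \<in> T_set" "m2 \<in> T_set" unfolding U_set_def by auto
  hence p1: "m1 > 0" and p2: "m2 > 0" using T_elem by blast+
  have M: "m0*m1*m2 > 0" using assms p1 p2 by simp
  show ?thesis
  proof (cases "k = 0")
    case True then show ?thesis by simp
  next
    case False
    have e: "1 - (m0*m1 + m0*m2 + m1*m2 - m0 - m1 - m2 + 1) / (m0*m1*m2) * real k
     + 2 * (m0 + m1 + m2 - 3) / (m0*m1*m2) * (real k * (real k - 1) / 2)
     - 6 / (m0*m1*m2) * (real k * (real k - 1) * (real k - 2) / 6)
     = - ((real k - m0) * ((real k - m1) * (real k - m2))) / (m0*m1*m2)"
      using M p1 p2 assms(1) by (simp add: field_simps)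
    have "real k - m0 \<ge> 0" using False assms by simp
    hence "(real k - m0) * ((real k - m1) * (real k - m2)) \<ge> 0" using U_prod[OF assms(3)] by simp
    hence "- ((real k - m0) * ((real k - m1) * (real k - m2))) / (m0*m1*m2) \<le> 0" using M
      by (simp add: divide_nonpos_pos)
    then show ?thesis using e False by simp
  qed
qed

lemma g2: fixes S :: "nat set" assumes "finite S"
  shows "(\<Sum>p1\<in>S. real (card {p2\<in>S. p2 < p1})) = real (card S) * (real (card S) - 1) / 2"
  using assms
proof (induction S rule: finite_linorder_max_induct)
  case empty then show ?case by simp
next
  case (insert b A)
  have lt: "\<forall>a\<in>A. a < b" by fact
  have bn: "b \<notin> A" using lt by auto
  have s1: "{p2 \<in> insert b A. p2 < b} = A" using lt by auto
  have s2: "(\<Sum>p1\<in>A. real (card {p2\<in>insert b A. p2 < p1})) = (\<Sum>p1\<in>A. real (card {p2\<in>A. p2 < p1}))"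
    using lt by (intro sum.cong) (auto intro!: arg_cong[where f=card])
  show ?case using insert bn s1 s2 by (simp add: algebra_simps)
qed

lemma g3: fixes S :: "nat set" assumes "finite S"
  shows "(\<Sum>p1\<in>S. \<Sum>p2\<in>{p\<in>S. p < p1}. real (card {p3\<in>S. p3 < p2}))
     = real (card S) * (real (card S) - 1) * (real (card S) - 2) / 6"
  using assms
proof (induction S rule: finite_linorder_max_induct)
  case empty then show ?case by simp
next
  case (insert b A)
  have lt: "\<forall>a\<in>A. a < b" by fact
  have bn: "b \<notin> A" using lt by auto
  have s1: "{p2 \<in> insert b A. p2 < b} = A" using lt by auto
  have s3: "(\<Sum>p2\<in>A. real (card {p3\<in>insert b A. p3 < p2})) = (\<Sum>p2\<in>A. real (card {p3\<in>A. p3 < p2}))"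
    using lt by (intro sum.cong) (auto intro!: arg_cong[where f=card])
  have s2: "(\<Sum>p1\<in>A. \<Sum>p2\<in>{p\<in>insert b A. p < p1}. real (card {p3\<in>insert b A. p3 < p2}))
     = (\<Sum>p1\<in>A. \<Sum>p2\<in>{p\<in>A. p < p1}. real (card {p3\<in>A. p3 < p2}))"
  proof (rule sum.cong)
    fix p1 assume "p1 \<in> A"
    hence "p1 < b" using insert by auto
    hence e: "{p\<in>insert b A. p < p1} = {p\<in>A. p < p1}" by auto
    show "(\<Sum>p2\<in>{p\<in>insert b A. p < p1}. real (card {p3\<in>insert b A. p3 < p2})) =
          (\<Sum>p2\<in>{p\<in>A. p < p1}. real (card {p3\<in>A. p3 < p2}))"
      unfolding e using \<open>p1 < b\<close> by (intro sum.cong) (auto intro!: arg_cong[where f=card])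
  qed simp
  have "(\<Sum>p1\<in>insert b A. \<Sum>p2\<in>{p\<in>insert b A. p < p1}. real (card {p3\<in>insert b A. p3 < p2}))
    = (\<Sum>p2\<in>A. real (card {p3\<in>A. p3 < p2})) + (\<Sum>p1\<in>A. \<Sum>p2\<in>{p\<in>A. p < p1}. real (card {p3\<in>A. p3 < p2}))"
    using insert bn s1 s2 s3 by simp
  also have "\<dots> = real (card A) * (real (card A) - 1) / 2 + real (card A) * (real (card A) - 1) * (real (card A) - 2) / 6"
    using g2[OF insert(1)] insert(3) by simp
  finally show ?case using insert bn by (simp add: field_simps)
qed


lemma card_ind: "finite B \<Longrightarrow> real (card {a\<in>B. Q a}) = (\<Sum>a\<in>B. if Q a then 1 else 0)"
  by (simp add: sum.inter_filter[symmetric])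

lemma sift_d:
  fixes A :: "nat set" and d :: nat and w :: real
  assumes "finite A" "\<forall>a\<in>A. a > 0" "d > 0" "\<forall>p. prime p \<and> p dvd d \<longrightarrow> w \<le> real p"
  shows "sift (subseq_d A d) w = card {a\<in>{a\<in>A. \<forall>p. prime p \<and> real p < w \<longrightarrow> \<not> p dvd a}. d dvd a}"
proof -
  have "bij_betw (\<lambda>b. b * d) {b \<in> subseq_d A d. \<forall>p. prime p \<and> real p < w \<longrightarrow> \<not> p dvd b}
      {a\<in>{a\<in>A. \<forall>p. prime p \<and> real p < w \<longrightarrow> \<not> p dvd a}. d dvd a}"
  proof (rule bij_betw_imageI)
    show "inj_on (\<lambda>b. b * d) {b \<in> subseq_d A d. \<forall>p. prime p \<and> real p < w \<longrightarrow> \<not> p dvd b}"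
      using assms(3) by (simp add: inj_on_def)
    show "(\<lambda>b. b * d) ` {b \<in> subseq_d A d. \<forall>p. prime p \<and> real p < w \<longrightarrow> \<not> p dvd b} =
      {a\<in>{a\<in>A. \<forall>p. prime p \<and> real p < w \<longrightarrow> \<not> p dvd a}. d dvd a}"
    proof (intro equalityI subsetI)
      fix x assume "x \<in> (\<lambda>b. b * d) ` {b \<in> subseq_d A d. \<forall>p. prime p \<and> real p < w \<longrightarrow> \<not> p dvd b}"
      then obtain b where x: "x = b * d" "b * d \<in> A" "\<forall>p. prime p \<and> real p < w \<longrightarrow> \<not> p dvd b"
        unfolding subseq_d_def by auto
      have "\<not> p dvd x" if "prime p" "real p < w" for p
      proof
        assume "p dvd x"
        hence "p dvd b \<or> p dvd d" using x(1) that(1) prime_dvd_mult_iff by blast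
        then show False
        proof
          assume "p dvd b" then show False using x(3) that by blast
        next
          assume "p dvd d" then have "w \<le> real p" using assms(4) that(1) by blast
          then show False using that(2) by linarith
        qed
      qed
      then show "x \<in> {a\<in>{a\<in>A. \<forall>p. prime p \<and> real p < w \<longrightarrow> \<not> p dvd a}. d dvd a}"
        using x by simp
    next
      fix x assume x: "x \<in> {a\<in>{a\<in>A. \<forall>p. prime p \<and> real p < w \<longrightarrow> \<not> p dvd a}. d dvd a}"
      then obtain c where c: "x = d * c" by blast
      have "\<not> p dvd c" if "prime p" "real p < w" for p
      proof
        assume "p dvd c"
        hence "p dvd x" using c by simp
        then show False using x that by simp
      qed
      moreover have "c * d \<in> A" using x c by (simp add: mult.commute)
      ultimately show "x \<in> (\<lambda>b. b * d) ` {b \<in> subseq_d A d. \<forall>p. prime p \<and> real p < w \<longrightarrow> \<not> p dvd b}"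
        unfolding subseq_d_def using c by (intro image_eqI[of _ _ c]) (simp_all add: mult.commute)
    qed
  qed
  then show ?thesis unfolding sift_def by (rule bij_betw_same_card)
qed


lemma filt: "finite S \<Longrightarrow> (\<Sum>x\<in>S. (if Q x then 1 else 0) * (f x::real)) = (\<Sum>x\<in>{x\<in>S. Q x}. f x)"
  proof -
  assume f: "finite S"
  have "(\<Sum>x\<in>S. (if Q x then 1 else 0) * (f x::real)) = (\<Sum>x\<in>S. if Q x then f x else 0)"
    by (rule sum.cong) simp_all
  also have "\<dots> = (\<Sum>x\<in>{x\<in>S. Q x}. f x)" using f by (simp add: sum.inter_filter)
  finally show ?thesis .
qed

lemma dvd2: fixes p1 p2 a :: nat assumes "prime p1" "prime p2" "p2 < p1"
  shows "(p1 * p2 dvd a) = (p1 dvd a \<and> p2 dvd a)"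
proof -
  have "coprime p1 p2" using assms by (intro primes_coprime) auto
  then show ?thesis by (metis divides_mult dvd_mult_left dvd_mult_right)
qed

lemma dvd3: fixes p1 p2 p3 a :: nat assumes "prime p1" "prime p2" "prime p3" "p2 < p1" "p3 < p2"
  shows "(p1 * p2 * p3 dvd a) = (p1 dvd a \<and> p2 dvd a \<and> p3 dvd a)"
proof -
  have "coprime p1 p3" "coprime p2 p3" using assms by (intro primes_coprime; simp)+
  hence "coprime (p1 * p2) p3" by simp
  then have "(p1 * p2 * p3 dvd a) = (p1 * p2 dvd a \<and> p3 dvd a)"
    by (metis divides_mult dvd_mult_left dvd_mult_right)
  then show ?thesis using dvd2[OF assms(1,2,4)] by simp
qed

lemma ite_mult: "(if P \<and> Q then 1 else 0) = (if P then 1 else 0) * ((if Q then 1 else 0)::real)"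
  by simp

lemma pbound: "real p < z \<Longrightarrow> p \<le> nat \<lceil>z\<rceil>"
  by (simp add: le_nat_iff) linarith

theorem theorem5:
  fixes A :: "nat set" and w z m0 m1 m2 :: real
  assumes "finite A" and "\<forall>a\<in>A. a > 0"
    and "w \<le> z" and "0 < m0" and "m0 \<le> 1" and "(m1, m2) \<in> U_set"
  shows "real (sift A z) \<ge>
      real (sift A w)
      - (m0*m1 + m0*m2 + m1*m2 - m0 - m1 - m2 + 1) / (m0*m1*m2)
          * (\<Sum>p1\<in>primes_between w z. real (sift (subseq_d A p1) w))
      + 2 * (m0 + m1 + m2 - 3) / (m0*m1*m2)
          * (\<Sum>p1\<in>primes_between w z. \<Sum>p2\<in>{p\<in>primes_between w z. p < p1}.
               real (sift (subseq_d A (p1*p2)) w))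
      - 6 / (m0*m1*m2)
          * (\<Sum>p1\<in>primes_between w z. \<Sum>p2\<in>{p\<in>primes_between w z. p < p1}.
               \<Sum>p3\<in>{p\<in>primes_between w z. p < p2}.
               real (sift (subseq_d A (p1*p2*p3)) w))"
proof -
  define PB where "PB = primes_between w z"
  define B where "B = {a\<in>A. \<forall>p. prime p \<and> real p < w \<longrightarrow> \<not> p dvd a}"
  define P where "P a = {p\<in>PB. p dvd a}" for a
  define C1 where "C1 = (m0*m1 + m0*m2 + m1*m2 - m0 - m1 - m2 + 1) / (m0*m1*m2)"
  define C2 where "C2 = 2 * (m0 + m1 + m2 - 3) / (m0*m1*m2)"
  define C3 where "C3 = 6 / (m0*m1*m2)"
  have finPB: "finite PB"
  proof (rule finite_subset)
    show "PB \<subseteq> {..nat \<lceil>z\<rceil>}" unfolding PB_def primes_between_def using pbound by auto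
  qed simp
  have wPB: "prime p \<and> w \<le> real p \<and> real p < z" if "p \<in> PB" for p
    using that unfolding PB_def primes_between_def by auto
  have finB: "finite B" unfolding B_def using assms(1) by simp
  have finP: "finite (P a)" for a unfolding P_def using finPB by simp
  have ind: "\<And>d. d > 0 \<Longrightarrow> (\<forall>p. prime p \<and> p dvd d \<longrightarrow> w \<le> real p) \<Longrightarrow>
      real (sift (subseq_d A d) w) = (\<Sum>a\<in>B. if d dvd a then 1 else 0)"
    using sift_d[OF assms(1,2)] card_ind[OF finB] unfolding B_def by simp
  have pdvd: "q = p1 \<or> q = p2 \<or> q = p3" if "prime q" "q dvd p1 * p2 * p3" "prime p1" "prime p2" "prime p3" for q p1 p2 p3 :: nat
    using that by (auto simp: prime_dvd_mult_iff dest: primes_dvd_imp_eq)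
  have pdvd2: "q = p1 \<or> q = p2" if "prime q" "q dvd p1 * p2" "prime p1" "prime p2" for q p1 p2 :: nat
    using that by (auto simp: prime_dvd_mult_iff dest: primes_dvd_imp_eq)
  have pdvd1: "q = p1" if "prime q" "q dvd p1" "prime p1" for q p1 :: nat
    using that by (auto dest: primes_dvd_imp_eq)

  have LHS: "real (sift A z) = (\<Sum>a\<in>B. if card (P a) = 0 then 1 else 0)"
  proof -
    have eq: "(\<forall>p. prime p \<and> real p < z \<longrightarrow> \<not> p dvd a) \<longleftrightarrow>
        (\<forall>p. prime p \<and> real p < w \<longrightarrow> \<not> p dvd a) \<and> card (P a) = 0" for a
    proof
      assume h: "\<forall>p. prime p \<and> real p < z \<longrightarrow> \<not> p dvd a"
      have "\<forall>p. prime p \<and> real p < w \<longrightarrow> \<not> p dvd a" using h assms(3) by force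
      moreover have "P a = {}" unfolding P_def using h wPB by blast
      ultimately show "(\<forall>p. prime p \<and> real p < w \<longrightarrow> \<not> p dvd a) \<and> card (P a) = 0" by simp
    next
      assume h: "(\<forall>p. prime p \<and> real p < w \<longrightarrow> \<not> p dvd a) \<and> card (P a) = 0"
      hence e: "P a = {}" using finP by simp
      show "\<forall>p. prime p \<and> real p < z \<longrightarrow> \<not> p dvd a"
      proof (intro allI impI)
        fix p assume p: "prime p \<and> real p < z"
        show "\<not> p dvd a"
        proof (cases "real p < w")
          case True then show ?thesis using h p by blast
        next
          case False
          hence "p \<in> PB" using p unfolding PB_def primes_between_def by simp
          then show ?thesis using e unfolding P_def by blast
        qed
      qed
    qed
    have "{a \<in> A. \<forall>p. prime p \<and> real p < z \<longrightarrow> \<not> p dvd a} = {a\<in>B. card (P a) = 0}"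
      unfolding B_def using eq by blast
    then show ?thesis unfolding sift_def using card_ind[OF finB] by simp
  qed
  have W: "real (sift A w) = (\<Sum>a\<in>B. 1)" unfolding sift_def B_def by simp

  have S1: "(\<Sum>p1\<in>PB. real (sift (subseq_d A p1) w)) = (\<Sum>a\<in>B. real (card (P a)))"
  proof -
    have "(\<Sum>p1\<in>PB. real (sift (subseq_d A p1) w)) = (\<Sum>p1\<in>PB. \<Sum>a\<in>B. if p1 dvd a then 1 else 0)"
    proof (rule sum.cong)
      fix p1 assume h: "p1 \<in> PB"
      show "real (sift (subseq_d A p1) w) = (\<Sum>a\<in>B. if p1 dvd a then 1 else 0)"
        using wPB[OF h] pdvd1 prime_gt_0_nat by (intro ind) auto
    qed simp
    also have "\<dots> = (\<Sum>a\<in>B. \<Sum>p1\<in>PB. if p1 dvd a then 1 else 0)" by (rule sum.swap)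
    also have "\<dots> = (\<Sum>a\<in>B. real (card (P a)))"
      unfolding P_def using card_ind[OF finPB] by simp
    finally show ?thesis .
  qed

  have S2: "(\<Sum>p1\<in>PB. \<Sum>p2\<in>{p\<in>PB. p < p1}. real (sift (subseq_d A (p1*p2)) w))
     = (\<Sum>a\<in>B. \<Sum>p1\<in>P a. real (card {p2\<in>P a. p2 < p1}))"
  proof -
    have "(\<Sum>p1\<in>PB. \<Sum>p2\<in>{p\<in>PB. p < p1}. real (sift (subseq_d A (p1*p2)) w))
        = (\<Sum>p1\<in>PB. \<Sum>p2\<in>{p\<in>PB. p < p1}. \<Sum>a\<in>B. (if p1 dvd a then 1 else 0) * (if p2 dvd a then 1 else 0))"
    proof (intro sum.cong refl)
      fix p1 p2 assume h1: "p1 \<in> PB" and h2: "p2 \<in> {p\<in>PB. p < p1}"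
      have pr: "prime p1" "prime p2" "p2 < p1" "w \<le> real p1" "w \<le> real p2" using wPB h1 h2 by auto
      have "real (sift (subseq_d A (p1*p2)) w) = (\<Sum>a\<in>B. if p1 * p2 dvd a then 1 else 0)"
      proof (rule ind)
        show "p1 * p2 > 0" using pr prime_gt_0_nat by simp
        show "\<forall>p. prime p \<and> p dvd p1 * p2 \<longrightarrow> w \<le> real p"
        proof (intro allI impI)
          fix p assume "prime p \<and> p dvd p1 * p2"
          hence "p = p1 \<or> p = p2" using pdvd2 pr by blast
          then show "w \<le> real p" using pr by blast
        qed
      qed
      also have "\<dots> = (\<Sum>a\<in>B. (if p1 dvd a then 1 else 0) * (if p2 dvd a then 1 else 0))"
        using dvd2[OF pr(1-3)] by (intro sum.cong) auto
      finally show "real (sift (subseq_d A (p1*p2)) w) = (\<Sum>a\<in>B. (if p1 dvd a then 1 else 0) * (if p2 dvd a then 1 else 0))" .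
    qed
    also have "\<dots> = (\<Sum>a\<in>B. \<Sum>p1\<in>PB. \<Sum>p2\<in>{p\<in>PB. p < p1}. (if p1 dvd a then 1 else 0) * (if p2 dvd a then 1 else 0))"
      by (subst sum.swap[of _ _ B]) (intro sum.cong refl sum.swap)
    also have "\<dots> = (\<Sum>a\<in>B. \<Sum>p1\<in>P a. real (card {p2\<in>P a. p2 < p1}))"
    proof (rule sum.cong)
      fix a
      have "(\<Sum>p1\<in>PB. \<Sum>p2\<in>{p\<in>PB. p < p1}. (if p1 dvd a then 1 else 0) * (if p2 dvd a then 1 else 0::real))
          = (\<Sum>p1\<in>PB. (if p1 dvd a then 1 else 0) * (\<Sum>p2\<in>{p\<in>PB. p < p1}. (if p2 dvd a then 1 else 0) * 1))"
        by (simp add: sum_distrib_left)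
      also have "\<dots> = (\<Sum>p1\<in>PB. (if p1 dvd a then 1 else 0) * real (card {p2\<in>P a. p2 < p1}))"
      proof (rule sum.cong[OF refl])
        fix p1
        have "(\<Sum>p2\<in>{p\<in>PB. p < p1}. (if p2 dvd a then 1 else 0) * 1) = (\<Sum>p2\<in>{p\<in>{p\<in>PB. p < p1}. p dvd a}. 1::real)"
          using finPB by (intro filt) simp
        also have "{p\<in>{p\<in>PB. p < p1}. p dvd a} = {p2\<in>P a. p2 < p1}" unfolding P_def by auto
        finally show "(if p1 dvd a then 1 else 0) * (\<Sum>p2\<in>{p\<in>PB. p < p1}. (if p2 dvd a then 1 else 0) * 1) = (if p1 dvd a then 1 else 0) * real (card {p2\<in>P a. p2 < p1})" by simp
      qed
      also have "\<dots> = (\<Sum>p1\<in>P a. real (card {p2\<in>P a. p2 < p1}))"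
        unfolding P_def using finPB by (intro filt)
      finally show "(\<Sum>p1\<in>PB. \<Sum>p2\<in>{p\<in>PB. p < p1}. (if p1 dvd a then 1 else 0) * (if p2 dvd a then 1 else 0))
          = (\<Sum>p1\<in>P a. real (card {p2\<in>P a. p2 < p1}))" .
    qed simp
    finally show ?thesis .
  qed
  have S3: "(\<Sum>p1\<in>PB. \<Sum>p2\<in>{p\<in>PB. p < p1}. \<Sum>p3\<in>{p\<in>PB. p < p2}. real (sift (subseq_d A (p1*p2*p3)) w))
     = (\<Sum>a\<in>B. \<Sum>p1\<in>P a. \<Sum>p2\<in>{p\<in>P a. p < p1}. real (card {p3\<in>P a. p3 < p2}))"
  proof -
    have "(\<Sum>p1\<in>PB. \<Sum>p2\<in>{p\<in>PB. p < p1}. \<Sum>p3\<in>{p\<in>PB. p < p2}. real (sift (subseq_d A (p1*p2*p3)) w))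
        = (\<Sum>p1\<in>PB. \<Sum>p2\<in>{p\<in>PB. p < p1}. \<Sum>p3\<in>{p\<in>PB. p < p2}. \<Sum>a\<in>B.
            (if p1 dvd a then 1 else 0) * ((if p2 dvd a then 1 else 0) * (if p3 dvd a then 1 else 0)))"
    proof (intro sum.cong refl)
      fix p1 p2 p3 assume h1: "p1 \<in> PB" and h2: "p2 \<in> {p\<in>PB. p < p1}" and h3: "p3 \<in> {p\<in>PB. p < p2}"
      have pr: "prime p1" "prime p2" "prime p3" "p2 < p1" "p3 < p2" "w \<le> real p1" "w \<le> real p2" "w \<le> real p3"
        using wPB h1 h2 h3 by auto
      have "real (sift (subseq_d A (p1*p2*p3)) w) = (\<Sum>a\<in>B. if p1 * p2 * p3 dvd a then 1 else 0)"
      proof (rule ind)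
        show "p1 * p2 * p3 > 0" using pr prime_gt_0_nat by simp
        show "\<forall>p. prime p \<and> p dvd p1 * p2 * p3 \<longrightarrow> w \<le> real p"
        proof (intro allI impI)
          fix p assume "prime p \<and> p dvd p1 * p2 * p3"
          hence "p = p1 \<or> p = p2 \<or> p = p3" using pdvd pr by blast
          then show "w \<le> real p" using pr by blast
        qed
      qed
      also have "\<dots> = (\<Sum>a\<in>B. (if p1 dvd a then 1 else 0) * ((if p2 dvd a then 1 else 0) * (if p3 dvd a then 1 else 0)))"
        using dvd3[OF pr(1-5)] by (intro sum.cong) auto
      finally show "real (sift (subseq_d A (p1*p2*p3)) w) = (\<Sum>a\<in>B. (if p1 dvd a then 1 else 0) * ((if p2 dvd a then 1 else 0) * (if p3 dvd a then 1 else 0)))" .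
    qed
    also have "\<dots> = (\<Sum>p1\<in>PB. \<Sum>p2\<in>{p\<in>PB. p < p1}. \<Sum>a\<in>B. \<Sum>p3\<in>{p\<in>PB. p < p2}.
            (if p1 dvd a then 1 else 0) * ((if p2 dvd a then 1 else 0) * (if p3 dvd a then 1 else 0::real)))"
      by (rule sum.cong[OF refl], rule sum.cong[OF refl], rule sum.swap)
    also have "\<dots> = (\<Sum>p1\<in>PB. \<Sum>a\<in>B. \<Sum>p2\<in>{p\<in>PB. p < p1}. \<Sum>p3\<in>{p\<in>PB. p < p2}.
            (if p1 dvd a then 1 else 0) * ((if p2 dvd a then 1 else 0) * (if p3 dvd a then 1 else 0::real)))"
      by (rule sum.cong[OF refl], rule sum.swap)
    also have "\<dots> = (\<Sum>a\<in>B. \<Sum>p1\<in>PB. \<Sum>p2\<in>{p\<in>PB. p < p1}. \<Sum>p3\<in>{p\<in>PB. p < p2}.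
            (if p1 dvd a then 1 else 0) * ((if p2 dvd a then 1 else 0) * (if p3 dvd a then 1 else 0::real)))"
      by (rule sum.swap)
    also have "\<dots> = (\<Sum>a\<in>B. \<Sum>p1\<in>P a. \<Sum>p2\<in>{p\<in>P a. p < p1}. real (card {p3\<in>P a. p3 < p2}))"
    proof (rule sum.cong[OF refl])
      fix a
      have in3: "(\<Sum>p3\<in>{p\<in>PB. p < p2}. (if p1 dvd a then 1 else 0) * ((if p2 dvd a then 1 else 0) * (if p3 dvd a then 1 else 0::real)))
          = (if p1 dvd a then 1 else 0) * ((if p2 dvd a then 1 else 0) * real (card {p3\<in>P a. p3 < p2}))" for p1 p2
      proof -
        have "(\<Sum>p3\<in>{p\<in>PB. p < p2}. (if p3 dvd a then 1 else 0) * 1) = (\<Sum>p3\<in>{p\<in>{p\<in>PB. p < p2}. p dvd a}. 1::real)"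
          using finPB by (intro filt) simp
        also have "{p\<in>{p\<in>PB. p < p2}. p dvd a} = {p3\<in>P a. p3 < p2}" unfolding P_def by auto
        finally have "(\<Sum>p3\<in>{p\<in>PB. p < p2}. (if p3 dvd a then 1 else 0) * 1) = real (card {p3\<in>P a. p3 < p2})" by simp
        then show ?thesis by (simp add: sum_distrib_left[symmetric])
      qed
      have in2: "(\<Sum>p2\<in>{p\<in>PB. p < p1}. (if p1 dvd a then 1 else 0) * ((if p2 dvd a then 1 else 0) * real (card {p3\<in>P a. p3 < p2})))
          = (if p1 dvd a then 1 else 0) * (\<Sum>p2\<in>{p\<in>P a. p < p1}. real (card {p3\<in>P a. p3 < p2}))" for p1
      proof -
        have "(\<Sum>p2\<in>{p\<in>PB. p < p1}. (if p2 dvd a then 1 else 0) * real (card {p3\<in>P a. p3 < p2}))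
            = (\<Sum>p2\<in>{p\<in>{p\<in>PB. p < p1}. p dvd a}. real (card {p3\<in>P a. p3 < p2}))"
          using finPB by (intro filt) simp
        also have "{p\<in>{p\<in>PB. p < p1}. p dvd a} = {p\<in>P a. p < p1}" unfolding P_def by auto
        finally show ?thesis by (simp add: sum_distrib_left[symmetric])
      qed
      have "(\<Sum>p1\<in>PB. \<Sum>p2\<in>{p\<in>PB. p < p1}. \<Sum>p3\<in>{p\<in>PB. p < p2}.
            (if p1 dvd a then 1 else 0) * ((if p2 dvd a then 1 else 0) * (if p3 dvd a then 1 else 0::real)))
          = (\<Sum>p1\<in>PB. (if p1 dvd a then 1 else 0) * (\<Sum>p2\<in>{p\<in>P a. p < p1}. real (card {p3\<in>P a. p3 < p2})))"
        by (simp only: in3 in2)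
      also have "\<dots> = (\<Sum>p1\<in>P a. \<Sum>p2\<in>{p\<in>P a. p < p1}. real (card {p3\<in>P a. p3 < p2}))"
        unfolding P_def using finPB by (intro filt)
      finally show "(\<Sum>p1\<in>PB. \<Sum>p2\<in>{p\<in>PB. p < p1}. \<Sum>p3\<in>{p\<in>PB. p < p2}.
            (if p1 dvd a then 1 else 0) * ((if p2 dvd a then 1 else 0) * (if p3 dvd a then 1 else 0::real)))
          = (\<Sum>p1\<in>P a. \<Sum>p2\<in>{p\<in>P a. p < p1}. real (card {p3\<in>P a. p3 < p2}))" .
    qed
    finally show ?thesis .
  qed

  have M: "m0*m1*m2 > 0"
  proof -
    from assms(6) have "m1 \<in> T_set" "m2 \<in> T_set" unfolding U_set_def by auto
    hence "m1 > 0" "m2 > 0" using T_elem by blast+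
    then show ?thesis using assms(4) by simp
  qed
  have "real (sift A w) - C1 * (\<Sum>p1\<in>PB. real (sift (subseq_d A p1) w))
      + C2 * (\<Sum>p1\<in>PB. \<Sum>p2\<in>{p\<in>PB. p < p1}. real (sift (subseq_d A (p1*p2)) w))
      - C3 * (\<Sum>p1\<in>PB. \<Sum>p2\<in>{p\<in>PB. p < p1}. \<Sum>p3\<in>{p\<in>PB. p < p2}. real (sift (subseq_d A (p1*p2*p3)) w))
    = (\<Sum>a\<in>B. 1) - C1 * (\<Sum>a\<in>B. real (card (P a)))
      + C2 * (\<Sum>a\<in>B. real (card (P a)) * (real (card (P a)) - 1) / 2)
      - C3 * (\<Sum>a\<in>B. real (card (P a)) * (real (card (P a)) - 1) * (real (card (P a)) - 2) / 6)"
    unfolding W S1 S2 S3 g2[OF finP] g3[OF finP] by simp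
  also have "\<dots> = (\<Sum>a\<in>B. 1 - C1 * real (card (P a))
      + C2 * (real (card (P a)) * (real (card (P a)) - 1) / 2)
      - C3 * (real (card (P a)) * (real (card (P a)) - 1) * (real (card (P a)) - 2) / 6))"
    by (simp add: sum_distrib_left sum_subtractf sum.distrib)
  also have "\<dots> \<le> (\<Sum>a\<in>B. if card (P a) = 0 then 1 else 0)"
    by (rule sum_mono) (unfold C1_def C2_def C3_def, rule poly[OF assms(4,5,6)])
  also have "\<dots> = real (sift A z)" using LHS by simp
  finally show ?thesis unfolding PB_def C1_def C2_def C3_def by simp
qed

end
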